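(* Let $P_1,\ldots,P_n$ be closed disks with centers $c_i$ and radii $\rho_i\ge0$, let $D_{ij}$ be the closed disk with center $c_i-c_j$ and radius $\rho_i+\rho_j$, $\mathcal{D}=\bigcup_{i,j}D_{ij}$, and let $A_{ij}$ be the Apollonius cell of $D_{ij}$ in the Apollonius diagram of $\{D_{ij}\}_{i,j=1}^n$. If an Apollonius edge $pq$ of $A_{ij}$ (with endpoints $p,q$) meets the circle $\partial D_{ij}$ at a point $x\ne p,q$, then there are points $x'$ on the edge $pq$ arbitrarily close to $x$ that are not contained in $\mathcal{D}$.
   Context: For a family of disks $D_k$ with centers $c_k$ and radii $\rho_k$, $\delta_k(x)=\|x-c_k\|-\rho_k$; the Apollonius cell of $D_k$ is $\{x\mid\delta_k(x)\le\delta_l(x)\text{ for all }l\}$; the one-dimensional connected sets of points belonging to exactly two cells are Apollonius edges. *)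

theory Defs
  imports "HOL-Analysis.Analysis"
begin

text \<open>A disk is represented by a pair (center, radius).\<close>

definition delta :: "((real^2) \<times> real) \<Rightarrow> real^2 \<Rightarrow> real" where
  "delta D x = norm (x - fst D) - snd D"

definition apollonius_cell :: "((real^2) \<times> real) set \<Rightarrow> ((real^2) \<times> real) \<Rightarrow> (real^2) set" where
  "apollonius_cell S D = {x. \<forall>D'\<in>S. delta D x \<le> delta D' x}"

definition two_cell_points :: "((real^2) \<times> real) set \<Rightarrow> (real^2) set" where
  "two_cell_points S = {x. card {D\<in>S. x \<in> apollonius_cell S D} = 2}"

definition apollonius_edge :: "((real^2) \<times> real) set \<Rightarrow> (real^2) set \<Rightarrow> bool" where
  "apollonius_edge S E \<longleftrightarrow> E \<in> components (two_cell_points S)"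

definition diff_disks :: "nat \<Rightarrow> (nat \<Rightarrow> real^2) \<Rightarrow> (nat \<Rightarrow> real) \<Rightarrow> ((real^2) \<times> real) set" where
  "diff_disks n c \<rho> = (\<lambda>(k,l). (c k - c l, \<rho> k + \<rho> l)) ` ({1..n} \<times> {1..n})"

definition diff_disks_union :: "nat \<Rightarrow> (nat \<Rightarrow> real^2) \<Rightarrow> (nat \<Rightarrow> real) \<Rightarrow> (real^2) set" where
  "diff_disks_union n c \<rho> = (\<Union>(k,l)\<in>{1..n} \<times> {1..n}. cball (c k - c l) (\<rho> k + \<rho> l))"

end

theory Submission
  imports Defs
begin

definition cr :: "real^2 \<Rightarrow> real^2 \<Rightarrow> real" where
  "cr w u = w$1 * u$2 - w$2 * u$1"

lemma norm2_vec2: "(norm (v::real^2))^2 = v$1^2 + v$2^2"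
  unfolding power2_norm_eq_inner by (simp add: inner_vec_def sum_2 power2_eq_square)

lemma inner_vec2: "(v::real^2) \<bullet> w = v$1*w$1 + v$2*w$2"
  by (simp add: inner_vec_def sum_2)

lemma lagrange2: "(u \<bullet> w)^2 + (cr w u)^2 = (norm u)^2 * (norm (w::real^2))^2"
  unfolding norm2_vec2 inner_vec2 cr_def by algebra

lemma norm_diff_sq: "(norm (u - w::real^2))^2 = (norm u)^2 - 2 * (u \<bullet> w) + (norm w)^2"
  by (simp add: power2_norm_eq_inner inner_diff_left inner_diff_right inner_commute)

lemma norm_diff_sq2:
  "(norm (y - b::real^2))^2 = (norm (y - a))^2 - 2 * ((y - a) \<bullet> (b - a)) + (norm (b - a))^2"
proof -
  have "y - b = (y - a) - (b - a)" by simp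
  then show ?thesis using norm_diff_sq[of "y - a" "b - a"] by metis
qed

lemma same_dist_cr_sq:
  fixes a b y1 y2 :: "real^2"
  assumes "norm (y1 - a) = norm (y2 - a)" "norm (y1 - b) = norm (y2 - b)"
  shows "(cr (b - a) (y1 - a))^2 = (cr (b - a) (y2 - a))^2"
proof -
  have "(y1 - a) \<bullet> (b - a) = (y2 - a) \<bullet> (b - a)"
    using assms norm_diff_sq2[of y1 b a] norm_diff_sq2[of y2 b a] by simp
  then show ?thesis using lagrange2[of "y1 - a" "b - a"] lagrange2[of "y2 - a" "b - a"] assms(1)
    by simp
qed

lemma same_dist_eq:
  fixes a b y1 y2 :: "real^2"
  assumes "a \<noteq> b" "norm (y1 - a) = norm (y2 - a)" "norm (y1 - b) = norm (y2 - b)"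
    "cr (b - a) (y1 - a) = cr (b - a) (y2 - a)"
  shows "y1 = y2"
proof -
  have i: "(y1 - a) \<bullet> (b - a) = (y2 - a) \<bullet> (b - a)"
    using assms norm_diff_sq2[of y1 b a] norm_diff_sq2[of y2 b a] by simp
  define w where "w = b - a"
  define d where "d = y1 - y2"
  have w0: "w$1^2 + w$2^2 > 0"
  proof -
    have "w \<noteq> 0" using assms(1) w_def by simp
    then have "norm w ^2 > 0" by simp
    then show ?thesis by (simp add: norm2_vec2)
  qed
  have h1: "d$1 * w$1 + d$2 * w$2 = 0" using i unfolding d_def w_def inner_vec2
    by (simp add: algebra_simps)
  have h2: "w$1 * d$2 - w$2 * d$1 = 0" using assms(4) unfolding d_def w_def cr_def
    by (simp add: algebra_simps)
  have "d$1 * (w$1^2 + w$2^2) = 0"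
  proof -
    have "d$1 * (w$1^2 + w$2^2) = w$1 * (d$1 * w$1 + d$2 * w$2) - w$2 * (w$1 * d$2 - w$2 * d$1)"
      by (simp add: algebra_simps power2_eq_square)
    then show ?thesis using h1 h2 by simp
  qed
  moreover have "d$2 * (w$1^2 + w$2^2) = 0"
  proof -
    have "d$2 * (w$1^2 + w$2^2) = w$2 * (d$1 * w$1 + d$2 * w$2) + w$1 * (w$1 * d$2 - w$2 * d$1)"
      by (simp add: algebra_simps power2_eq_square)
    then show ?thesis using h1 h2 by simp
  qed
  ultimately have "d$1 = 0" "d$2 = 0" using w0 by auto
  then have "d = 0" by (simp add: vec_eq_iff forall_2)
  then show ?thesis using d_def by simp
qed


lemma key_geom:
  fixes a b x :: "real^2" and r s :: real
  assumes ab: "a \<noteq> b" and xa: "norm (x - a) = r" and xb: "norm (x - b) = s"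
  shows "\<exists>e>0. \<forall>y1 y2. norm (y1 - a) - r = norm (y1 - b) - s \<longrightarrow> norm (y1 - a) \<le> r
     \<longrightarrow> norm (y2 - a) - r = norm (y2 - b) - s \<longrightarrow> norm (y2 - a) \<le> r
     \<longrightarrow> dist y1 x < e \<longrightarrow> dist y2 x < e \<longrightarrow> norm (y1 - a) = norm (y2 - a) \<longrightarrow> y1 = y2"
proof -
  define sd where "sd y = cr (b - a) (y - a)" for y
  show ?thesis
  proof (cases "sd x = 0")
    case False
    have "((\<lambda>y. sd y * sd x) \<longlongrightarrow> sd x * sd x) (at x)"
      unfolding sd_def cr_def by (intro tendsto_intros)
    moreover have sxx: "0 < sd x * sd x" using False by (auto simp add: zero_less_mult_iff linorder_neq_iff)
    ultimately have "\<forall>\<^sub>F y in at x. 0 < sd y * sd x" by (rule order_tendstoD(1))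
    then obtain e where e0: "e > 0" and he: "\<And>y. y \<noteq> x \<Longrightarrow> dist y x < e \<Longrightarrow> 0 < sd y * sd x"
      unfolding eventually_at by auto
    have he': "0 < sd y * sd x" if "dist y x < e" for y
      using he[of y] that sxx by (cases "y = x") auto
    show ?thesis
    proof (intro exI[of _ e] conjI e0 allI impI)
      fix y1 y2 assume h: "norm (y1 - a) - r = norm (y1 - b) - s" "norm (y1 - a) \<le> r"
        "norm (y2 - a) - r = norm (y2 - b) - s" "norm (y2 - a) \<le> r"
        "dist y1 x < e" "dist y2 x < e" "norm (y1 - a) = norm (y2 - a)"
      have nb: "norm (y1 - b) = norm (y2 - b)" using h by linarith
      have "(sd y1)^2 = (sd y2)^2" unfolding sd_def using same_dist_cr_sq[OF h(7) nb] .
      then have "sd y1 = sd y2 \<or> sd y1 = - sd y2" by (simp add: power2_eq_iff)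
      moreover have "0 < sd y1 * sd x" "0 < sd y2 * sd x" using he' h(5,6) by auto
      ultimately have "sd y1 = sd y2"
        by (metis add.inverse_inverse minus_mult_minus mult_minus_left neg_0_less_iff_less order_less_asym)
      then show "y1 = y2" using same_dist_eq[OF ab h(7) nb] unfolding sd_def by simp
    qed
  next
    case True
    define w where "w = b - a"
    define d where "d = norm w"
    have d0: "d > 0" using ab unfolding d_def w_def by simp
    have r0: "r \<ge> 0" "s \<ge> 0" using xa xb by auto
    have lx: "((x - a) \<bullet> w)^2 = (r * d)^2"
      using lagrange2[of "x - a" w] True xa unfolding sd_def w_def d_def by (simp add: power_mult_distrib)
    have sx: "s^2 = r^2 - 2 * ((x - a) \<bullet> w) + d^2"
      using norm_diff_sq2[of x b a] xa xb unfolding w_def d_def by simp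
    have zero: "sd y = 0" if hy: "norm (y - a) - r = norm (y - b) - s" "norm (y - a) \<le> r" for y
    proof -
      define t where "t = norm (y - a)"
      define p where "p = (y - a) \<bullet> w"
      have yb: "norm (y - b) = t - r + s" using hy unfolding t_def by linarith
      have nb2: "(norm (y - b))^2 = t^2 - 2 * p + d^2"
        using norm_diff_sq2[of y b a] unfolding t_def p_def d_def w_def .
      have sy: "(t - r + s)^2 = t^2 - 2 * p + d^2" using nb2 unfolding yb .
      have tri: "d \<le> t + (t - r + s)"
      proof -
        have "norm (b - a) \<le> norm (y - a) + norm ((b - a) - (y - a))"
          by (rule norm_triangle_sub)
        moreover have "(b - a) - (y - a) = b - y" by simp
        moreover have "norm (b - y) = norm (y - b)" by (rule norm_minus_commute)
        ultimately have "norm (b - a) \<le> norm (y - a) + norm (y - b)" by simp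
        then have "d \<le> t + norm (y - b)" unfolding d_def w_def t_def .
        then show ?thesis using yb by linarith
      qed
      have "(x - a) \<bullet> w = r * d \<or> (x - a) \<bullet> w = - (r * d)" using lx by (simp add: power2_eq_iff)
      then have "s^2 = (r - d)^2 \<or> s^2 = (r + d)^2"
      proof
        assume q: "(x - a) \<bullet> w = r * d"
        have "(r - d)^2 = r^2 - 2 * (r * d) + d^2" by algebra
        then show ?thesis using sx q by simp
      next
        assume q: "(x - a) \<bullet> w = - (r * d)"
        have "(r + d)^2 = r^2 - 2 * (- (r * d)) + d^2" by algebra
        then show ?thesis using sx q by simp
      qed
      then have "s = r - d \<or> s = d - r \<or> s = r + d" using r0 d0
        by (smt (verit) power2_eq_iff)
      then have "p^2 = (t * d)^2"
      proof (elim disjE)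
        assume ss: "s = r - d"
        have "(t - r + s)^2 = t^2 - 2 * (t * d) + d^2" unfolding ss by algebra
        then have "p = t * d" using sy by simp
        then show ?thesis by simp
      next
        assume ss: "s = r + d"
        have "(t - r + s)^2 = t^2 - 2 * (- (t * d)) + d^2" unfolding ss by algebra
        then have "- p = t * d" using sy by simp
        then have "p = - (t * d)" by linarith
        then show ?thesis by simp
      next
        assume ss: "s = d - r"
        then have tr: "t = r" using tri hy(2) t_def by linarith
        have "(t - r + s)^2 = t^2 - 2 * (t * d) + d^2" unfolding ss tr by algebra
        then have "p = t * d" using sy by simp
        then show ?thesis by simp
      qed
      then have "(sd y)^2 = 0" using lagrange2[of "y - a" w] unfolding sd_def w_def p_def t_def d_def
        by (simp add: power_mult_distrib)
      then show ?thesis by simp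
    qed
    show ?thesis
    proof (intro exI[of _ 1] conjI allI impI)
      fix y1 y2 assume h: "norm (y1 - a) - r = norm (y1 - b) - s" "norm (y1 - a) \<le> r"
        "norm (y2 - a) - r = norm (y2 - b) - s" "norm (y2 - a) \<le> r"
        "dist y1 x < 1" "dist y2 x < 1" "norm (y1 - a) = norm (y2 - a)"
      have nb: "norm (y1 - b) = norm (y2 - b)" using h by linarith
      have "sd y1 = sd y2" using zero[OF h(1,2)] zero[OF h(3,4)] by simp
      then show "y1 = y2" using same_dist_eq[OF ab h(7) nb] unfolding sd_def by simp
    qed simp
  qed
qed


lemma arc_no_interior_max:
  fixes g :: "real \<Rightarrow> 'a::metric_space" and f :: "'a \<Rightarrow> real"
  assumes arc: "arc g" and t0: "0 < t0" "t0 < 1" and cf: "continuous_on UNIV f"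
    and U: "open U" "g t0 \<in> U"
    and le: "\<forall>t. 0 < t \<longrightarrow> t < 1 \<longrightarrow> g t \<in> U \<longrightarrow> f (g t) \<le> f (g t0)"
    and inj: "\<forall>t1 t2. 0 < t1 \<longrightarrow> t1 < 1 \<longrightarrow> 0 < t2 \<longrightarrow> t2 < 1 \<longrightarrow> g t1 \<in> U \<longrightarrow> g t2 \<in> U
       \<longrightarrow> f (g t1) = f (g t2) \<longrightarrow> t1 = t2"
  shows False
proof -
  have cg: "continuous_on {0..1} g" using arc unfolding arc_def path_def by simp
  obtain e where e0: "e > 0" and eU: "ball (g t0) e \<subseteq> U" using U openE by blast
  obtain d where d0: "d > 0" and hd: "\<forall>t\<in>{0..1}. dist t t0 < d \<longrightarrow> dist (g t) (g t0) < e"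
    using cg e0 t0 unfolding continuous_on_iff by (meson atLeastAtMost_iff less_eq_real_def)
  define \<delta> where "\<delta> = min (d/2) (min (t0/2) ((1-t0)/2))"
  have \<delta>0: "\<delta> > 0" using d0 t0 unfolding \<delta>_def by simp
  have inU: "0 < t \<and> t < 1 \<and> g t \<in> U" if "t0 - \<delta> \<le> t" "t \<le> t0 + \<delta>" for t
  proof -
    have m: "2 * \<delta> \<le> t0" "2 * \<delta> \<le> 1 - t0" "2 * \<delta> \<le> d" unfolding \<delta>_def by (auto simp: min_def)
    have t1: "0 < t" "t < 1" using that t0 m \<delta>0 by linarith+
    moreover have "dist t t0 < d" using that d0 m \<delta>0 unfolding dist_real_def by (simp add: abs_le_iff)
    ultimately have "dist (g t) (g t0) < e" using hd by auto
    then have "g t \<in> ball (g t0) e" by (simp add: dist_commute)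
    then show ?thesis using eU t1 by auto
  qed
  define u where "u = t0 - \<delta>"
  define v where "v = t0 + \<delta>"
  have cphi: "continuous_on {u..v} (f \<circ> g)"
    apply (rule continuous_on_compose)
     apply (rule continuous_on_subset[OF cg])
    using inU unfolding u_def v_def apply fastforce
    using cf continuous_on_subset by blast
  have iu: "0 < u \<and> u < 1 \<and> g u \<in> U" "0 < v \<and> v < 1 \<and> g v \<in> U" "0 < t0 \<and> t0 < 1 \<and> g t0 \<in> U"
    using inU[of u] inU[of v] inU[of t0] \<delta>0 unfolding u_def v_def by auto
  have fu: "f (g u) < f (g t0)"
  proof -
    have "f (g u) \<le> f (g t0)" using le iu by auto
    moreover have "f (g u) \<noteq> f (g t0)" using inj iu \<delta>0 unfolding u_def by fastforce
    ultimately show ?thesis by simp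
  qed
  have fv: "f (g v) < f (g t0)"
  proof -
    have "f (g v) \<le> f (g t0)" using le iu by auto
    moreover have "f (g v) \<noteq> f (g t0)" using inj iu \<delta>0 unfolding v_def by fastforce
    ultimately show ?thesis by simp
  qed
  define y where "y = (max (f (g u)) (f (g v)) + f (g t0)) / 2"
  have y1: "f (g u) \<le> y" "f (g v) \<le> y" "y < f (g t0)" using fu fv unfolding y_def by auto
  obtain t1 where t1: "u \<le> t1" "t1 \<le> t0" "(f \<circ> g) t1 = y"
    using IVT'[of "f \<circ> g" u y t0] y1 \<delta>0 continuous_on_subset[OF cphi, of "{u..t0}"]
    unfolding u_def v_def by auto
  obtain t2 where t2: "t0 \<le> t2" "t2 \<le> v" "(f \<circ> g) t2 = y"
    using IVT2'[of "f \<circ> g" v y t0] y1 \<delta>0 continuous_on_subset[OF cphi, of "{t0..v}"]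
    unfolding u_def v_def by auto
  have "t1 = t2" using inj inU[of t1] inU[of t2] t1 t2 \<delta>0 unfolding u_def v_def by auto
  then have "t1 = t0" using t1 t2 by simp
  then show False using t1 y1 by simp
qed


theorem proposition13:
  fixes n i j :: nat and c :: "nat \<Rightarrow> real^2" and \<rho> :: "nat \<Rightarrow> real"
    and E :: "(real^2) set" and g :: "real \<Rightarrow> real^2" and p q x :: "real^2"
  assumes "\<forall>k\<in>{1..n}. \<rho> k \<ge> 0"
    and "i \<in> {1..n}" and "j \<in> {1..n}"
    and "apollonius_edge (diff_disks n c \<rho>) E"
    and "E \<subseteq> apollonius_cell (diff_disks n c \<rho>) (c i - c j, \<rho> i + \<rho> j)"
    and "arc g" and "pathstart g = p" and "pathfinish g = q"
    and "E = path_image g - {p, q}"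
    and "x \<in> path_image g" and "x \<noteq> p" and "x \<noteq> q"
    and "x \<in> sphere (c i - c j) (\<rho> i + \<rho> j)"
  shows "\<forall>\<epsilon>>0. \<exists>x'\<in>E. dist x' x < \<epsilon> \<and> x' \<notin> diff_disks_union n c \<rho>"
proof (intro allI impI)
  fix \<epsilon> :: real assume \<epsilon>0: "\<epsilon> > 0"
  show "\<exists>x'\<in>E. dist x' x < \<epsilon> \<and> x' \<notin> diff_disks_union n c \<rho>"
  proof (rule ccontr)
    assume H: "\<not> (\<exists>x'\<in>E. dist x' x < \<epsilon> \<and> x' \<notin> diff_disks_union n c \<rho>)"
    define S where "S = diff_disks n c \<rho>"
    define a where "a = c i - c j"
    define r where "r = \<rho> i + \<rho> j"
    define A where "A = (a, r)"
    have AS: "A \<in> S" using assms(2,3) unfolding S_def A_def a_def r_def diff_disks_def by force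
    have finS: "finite S" unfolding S_def diff_disks_def by simp
    have xE: "x \<in> E" using assms(9-12) by auto
    have E2: "E \<subseteq> two_cell_points S" using assms(4) in_components_subset
      unfolding S_def apollonius_edge_def by blast
    have cellA: "y \<in> apollonius_cell S A" if "y \<in> E" for y
      using assms(5) that unfolding S_def A_def a_def r_def by auto
    have minA: "delta A y \<le> delta D y" if "y \<in> E" "D \<in> S" for y D
      using cellA[OF that(1)] that(2) unfolding apollonius_cell_def by auto
    have dAx: "delta A x = 0" using assms(13) unfolding A_def a_def r_def delta_def
      by (simp add: dist_norm norm_minus_commute)
    define C where "C y = {D\<in>S. y \<in> apollonius_cell S D}" for y
    have card2: "card (C y) = 2" if "y \<in> E" for y
      using E2 that unfolding two_cell_points_def C_def by auto
    have AC: "A \<in> C x" using cellA xE AS C_def by auto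
    obtain u v where uv: "C x = {u, v}" "u \<noteq> v" using card2[OF xE] unfolding card_2_iff by auto
    obtain B0 where B0: "B0 \<in> C x" "B0 \<noteq> A" and Cx: "C x = {A, B0}"
    proof (cases "A = u")
      case True then show ?thesis using that uv by auto
    next
      case False then have "A = v" using AC uv by auto
      then show ?thesis using that uv by auto
    qed
    have B0S: "B0 \<in> S" and cellB0: "x \<in> apollonius_cell S B0" using B0 C_def by auto
    have dB0x: "delta B0 x = 0"
    proof -
      have "delta A x \<le> delta B0 x" using minA xE B0S by auto
      moreover have "delta B0 x \<le> delta A x" using cellB0 AS unfolding apollonius_cell_def by auto
      ultimately show ?thesis using dAx by simp
    qed
    have others: "delta A x < delta D x" if D: "D \<in> S - {A, B0}" for D
    proof -
      have "D \<notin> C x" using Cx D by auto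
      then have "x \<notin> apollonius_cell S D" using C_def D by auto
      then obtain D' where "D' \<in> S" "delta D' x < delta D x"
        unfolding apollonius_cell_def by (auto simp: not_le)
      then show ?thesis using minA[OF xE, of D'] by simp
    qed
    have "\<forall>\<^sub>F y in at x. \<forall>D\<in>S - {A, B0}. delta A y < delta D y"
    proof (rule eventually_ball_finite)
      show "finite (S - {A, B0})" using finS by simp
      show "\<forall>D\<in>S - {A, B0}. \<forall>\<^sub>F y in at x. delta A y < delta D y"
      proof
        fix D assume D: "D \<in> S - {A, B0}"
        have "((\<lambda>y. delta D y - delta A y) \<longlongrightarrow> delta D x - delta A x) (at x)"
          unfolding delta_def by (intro tendsto_intros)
        moreover have "0 < delta D x - delta A x" using others D by simp
        ultimately have "\<forall>\<^sub>F y in at x. 0 < delta D y - delta A y" by (rule order_tendstoD(1))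
        then show "\<forall>\<^sub>F y in at x. delta A y < delta D y" by eventually_elim simp
      qed
    qed
    then obtain e2 where e20: "e2 > 0"
      and e2: "\<And>y. y \<noteq> x \<Longrightarrow> dist y x < e2 \<Longrightarrow> \<forall>D\<in>S - {A, B0}. delta A y < delta D y"
      unfolding eventually_at by auto
    have e2': "\<forall>D\<in>S - {A, B0}. delta A y < delta D y" if "dist y x < e2" for y
      using e2[of y] others that by (cases "y = x") auto
    have onB: "delta A y = delta B0 y" if y: "y \<in> E" "dist y x < e2" for y
    proof -
      have sub: "C y \<subseteq> {A, B0}"
      proof
        fix D assume D: "D \<in> C y"
        then have DS: "D \<in> S" and yD: "y \<in> apollonius_cell S D" using C_def by auto
        have "delta D y \<le> delta A y" using yD AS unfolding apollonius_cell_def by auto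
        show "D \<in> {A, B0}"
        proof (rule ccontr)
          assume "D \<notin> {A, B0}"
          then have "D \<in> S - {A, B0}" using DS by simp
          then have "delta A y < delta D y" using e2'[OF y(2)] by blast
          then show False using \<open>delta D y \<le> delta A y\<close> by simp
        qed
      qed
      have c2: "card {A, B0} = 2" using B0(2) by simp
      have "C y = {A, B0}"
        using card_subset_eq[OF _ sub] card2[OF y(1)] c2 by simp
      then have "B0 \<in> C y" by simp
      then have "delta B0 y \<le> delta A y" using AS unfolding C_def apollonius_cell_def by auto
      then show ?thesis using minA[OF y(1) B0S] by simp
    qed
    have inD: "delta A y \<le> 0" if y: "y \<in> E" "dist y x < \<epsilon>" for y
    proof -
      have "y \<in> diff_disks_union n c \<rho>" using H y by auto
      then obtain k l where kl: "k \<in> {1..n}" "l \<in> {1..n}" "y \<in> cball (c k - c l) (\<rho> k + \<rho> l)"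
        unfolding diff_disks_union_def by auto
      define D where "D = (c k - c l, \<rho> k + \<rho> l)"
      have "D \<in> S" using kl unfolding D_def S_def diff_disks_def by force
      moreover have "delta D y \<le> 0" using kl(3) unfolding D_def delta_def
        by (simp add: dist_norm norm_minus_commute)
      ultimately show ?thesis using minA[OF y(1), of D] by simp
    qed
    obtain b s where B0bs: "B0 = (b, s)" by (cases B0)
    have dA: "delta A y = norm (y - a) - r" for y unfolding A_def delta_def by simp
    have dB: "delta B0 y = norm (y - b) - s" for y unfolding B0bs delta_def by simp
    have xa: "norm (x - a) = r" using dAx dA by simp
    have xb: "norm (x - b) = s" using dB0x dB by simp
    have ab: "a \<noteq> b"
    proof
      assume "a = b"
      then have "r = s" using xa xb by simp
      then show False using B0(2) B0bs A_def \<open>a = b\<close> by simp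
    qed
    obtain e3 where e3c: "e3 > 0 \<and> (\<forall>y1 y2. norm (y1 - a) - r = norm (y1 - b) - s \<longrightarrow> norm (y1 - a) \<le> r
     \<longrightarrow> norm (y2 - a) - r = norm (y2 - b) - s \<longrightarrow> norm (y2 - a) \<le> r
     \<longrightarrow> dist y1 x < e3 \<longrightarrow> dist y2 x < e3 \<longrightarrow> norm (y1 - a) = norm (y2 - a) \<longrightarrow> y1 = y2)"
      using key_geom[OF ab xa xb] by (rule exE)
    have e30: "e3 > 0" using e3c by (rule conjunct1)
    have inj3: "\<forall>y1 y2. norm (y1 - a) - r = norm (y1 - b) - s \<longrightarrow> norm (y1 - a) \<le> r
     \<longrightarrow> norm (y2 - a) - r = norm (y2 - b) - s \<longrightarrow> norm (y2 - a) \<le> r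
     \<longrightarrow> dist y1 x < e3 \<longrightarrow> dist y2 x < e3 \<longrightarrow> norm (y1 - a) = norm (y2 - a) \<longrightarrow> y1 = y2" using e3c by (rule conjunct2)
    obtain t0 where t0: "t0 \<in> {0..1}" "g t0 = x" using assms(10) unfolding path_image_def by auto
    have injg: "inj_on g {0..1}" using assms(6) unfolding arc_def by simp
    have t00: "t0 \<noteq> 0" using t0 assms(7,11) unfolding pathstart_def by auto
    have t01: "t0 \<noteq> 1" using t0 assms(8,12) unfolding pathfinish_def by auto
    have inE: "g t \<in> E" if "0 < t" "t < 1" for t
    proof -
      have "g t \<in> path_image g" using that unfolding path_image_def by auto
      moreover have "g t \<noteq> p" using injg that assms(7) unfolding pathstart_def inj_on_def
        by (metis atLeastAtMost_iff less_eq_real_def less_numeral_extra(3) zero_le_one)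
      moreover have "g t \<noteq> q" using injg that assms(8) unfolding pathfinish_def inj_on_def
        by (metis atLeastAtMost_iff less_eq_real_def less_numeral_extra(4) zero_le_one)
      ultimately show ?thesis using assms(9) by auto
    qed
    define U where "U = ball x (min \<epsilon> (min e2 e3))"
    show False
    proof (rule arc_no_interior_max[OF assms(6), of t0 "\<lambda>y. norm (y - a)" U])
      show "0 < t0" "t0 < 1" using t0 t00 t01 by auto
      show "continuous_on UNIV (\<lambda>y. norm (y - a))" by (intro continuous_intros)
      show "open U" unfolding U_def by simp
      show "g t0 \<in> U" using t0 \<epsilon>0 e20 e30 unfolding U_def by simp
      show "\<forall>t. 0 < t \<longrightarrow> t < 1 \<longrightarrow> g t \<in> U \<longrightarrow> norm (g t - a) \<le> norm (g t0 - a)"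
      proof (intro allI impI)
        fix t assume h: "0 < t" "t < 1" "g t \<in> U"
        have "dist (g t) x < \<epsilon>" using h(3) unfolding U_def by (simp add: dist_commute)
        then have "delta A (g t) \<le> 0" using inD[OF inE[OF h(1,2)]] by simp
        then show "norm (g t - a) \<le> norm (g t0 - a)" using dA t0 xa by simp
      qed
      show "\<forall>t1 t2. 0 < t1 \<longrightarrow> t1 < 1 \<longrightarrow> 0 < t2 \<longrightarrow> t2 < 1 \<longrightarrow> g t1 \<in> U \<longrightarrow> g t2 \<in> U
       \<longrightarrow> norm (g t1 - a) = norm (g t2 - a) \<longrightarrow> t1 = t2"
      proof (intro allI impI)
        fix t1 t2 assume h: "0 < t1" "t1 < 1" "0 < t2" "t2 < 1" "g t1 \<in> U" "g t2 \<in> U"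
          "norm (g t1 - a) = norm (g t2 - a)"
        have m1: "dist (g t1) x < min \<epsilon> (min e2 e3)" using h(5) unfolding U_def by (simp add: dist_commute)
        have m2: "dist (g t2) x < min \<epsilon> (min e2 e3)" using h(6) unfolding U_def by (simp add: dist_commute)
        have d1: "dist (g t1) x < \<epsilon>" "dist (g t1) x < e2" "dist (g t1) x < e3"
          using m1 by simp_all
        have d2: "dist (g t2) x < \<epsilon>" "dist (g t2) x < e2" "dist (g t2) x < e3"
          using m2 by simp_all
        have E1: "g t1 \<in> E" by (rule inE[OF h(1,2)])
        have E2': "g t2 \<in> E" by (rule inE[OF h(3,4)])
        have f1: "norm (g t1 - a) - r = norm (g t1 - b) - s" using onB[OF E1 d1(2)] dA[of "g t1"] dB[of "g t1"] by linarith
        have f2: "norm (g t1 - a) \<le> r" using inD[OF E1 d1(1)] dA[of "g t1"] by linarith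
        have f3: "norm (g t2 - a) - r = norm (g t2 - b) - s" using onB[OF E2' d2(2)] dA[of "g t2"] dB[of "g t2"] by linarith
        have f4: "norm (g t2 - a) \<le> r" using inD[OF E2' d2(1)] dA[of "g t2"] by linarith
        have "g t1 = g t2" by (rule inj3[rule_format, OF f1 f2 f3 f4 d1(3) d2(3) h(7)])
        moreover have "t1 \<in> {0..1}" "t2 \<in> {0..1}" using h(1-4) by simp_all
        ultimately show "t1 = t2" by (rule inj_onD[OF injg])
      qed
    qed
  qed
qed

end
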